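(* For all $L>0$ there exists $C>0$ such that for all $J\ge2$, all $\delta t>0$ with $\delta t/\delta x^2\le1/2$, and all $n\ge1$, $$\sum_{\ell=1}^{J-1}\Big|\delta t\sum_{k=0}^{n-1}(1+\delta t\,\lambda_\ell)^k\Big|^2\le C.$$
   Context: $\delta x=L/(J-1)$, $\lambda_\ell=-\frac4{\delta x^2}\sin^2\big(\frac{\ell\pi}{2J}\big)$ for $0\le\ell\le J-1$. *)

theory Defs
  imports Complex_Main
begin

definition dx :: "real \<Rightarrow> nat \<Rightarrow> real" where
  "dx L J = L / (real J - 1)"

definition lam :: "real \<Rightarrow> nat \<Rightarrow> nat \<Rightarrow> real" where
  "lam L J l = - 4 / (dx L J)^2 * (sin (real l * pi / (2 * real J)))^2"

end

theory Submission
  imports Defs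
begin

lemma gen_lb: "\<bar>s - x\<bar> \<le> c \<Longrightarrow> c \<le> 2 * x / 3 \<Longrightarrow> x / 3 \<le> (s::real)"
  by (simp add: abs_le_iff)

lemma sin_lb:
  fixes x :: real
  assumes "0 \<le> x" "x \<le> 2"
  shows "x / 3 \<le> sin x"
proof -
  have m: "\<bar>sin x - (\<Sum>m<3. sin_coeff m * x ^ m)\<bar> \<le> inverse (fact 3) * \<bar>x\<bar> ^ 3"
    by (rule Maclaurin_sin_bound)
  have s: "(\<Sum>m<3. sin_coeff m * x ^ m) = x"
    by (simp add: numeral_3_eq_3 sin_coeff_def)
  have f: "(fact 3 :: real) = 6" by (simp add: numeral_3_eq_3)
  have h0: "\<bar>sin x - x\<bar> \<le> inverse 6 * \<bar>x\<bar> ^ 3"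
    using m by (simp only: s f)
  have a: "\<bar>x\<bar> = x" by (rule abs_of_nonneg[OF assms(1)])
  have e: "inverse 6 * x^3 = x^3 / (6::real)" by (metis divide_inverse mult.commute)
  have h: "\<bar>sin x - x\<bar> \<le> x ^ 3 / 6"
    using h0 unfolding a e .
  have x3: "x ^ 3 \<le> 4 * x"
  proof -
    have xx: "x * x \<le> 2 * 2" using assms by (intro mult_mono) auto
    have "x ^ 3 = (x * x) * x" by (simp add: power3_eq_cube)
    also have "\<dots> \<le> (2 * 2) * x" using xx assms by (intro mult_right_mono) auto
    finally show "x ^ 3 \<le> 4 * x" by simp
  qed
  have "x^3 / 6 \<le> 2 * x / 3" using x3 by simp
  with h show ?thesis by (rule gen_lb)
qed

lemma A: "J \<ge> 2 \<Longrightarrow> L > 0 \<Longrightarrow> dx L J * real J \<le> 2 * L"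
  unfolding dx_def by (simp add: field_simps)
lemma st: "real m > 0 \<Longrightarrow> 1 / (real m + 1)^2 + 1 / (real m + 1) \<le> 1 / real m"
proof -
  assume m0: "real m > 0"
  have "1 / (real m + 1)^2 \<le> 1 / (real m * (real m + 1))"
    using m0 by (intro divide_left_mono) (auto simp: power2_eq_square)
  also have "\<dots> = 1 / real m - 1 / (real m + 1)" using m0 by (simp add: field_simps)
  finally show ?thesis by simp
qed
lemma B:
  fixes T h q l J L :: real
  assumes "T \<le> h^2 / (2 * q)" "0 \<le> T" "q \<ge> (l / (3 * J))^2" "h * J \<le> 2 * L"
    "l \<ge> 1" "J > 0" "h > 0" "L > 0"
  shows "T^2 \<le> 324 * L^4 * (1 / l^2)"
proof -
  have qp: "(l / (3 * J))^2 > 0" using assms by simp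
  have "h^2 / (2 * q) \<le> h^2 / (2 * (l / (3 * J))^2)"
  proof -
    have "q > 0" using assms qp by linarith
    then have "0 < (2 * q) * (2 * (l / (3 * J))^2)" using qp by simp
    moreover have "2 * (l / (3 * J))^2 \<le> 2 * q" using assms by simp
    ultimately show ?thesis by (intro divide_left_mono) auto
  qed
  also have "\<dots> = 9 / 2 * (h * J)^2 / l^2"
    using assms by (simp add: field_simps)
  also have "\<dots> \<le> 9 / 2 * (2 * L)^2 / l^2"
  proof -
    have "(h * J)^2 \<le> (2 * L)^2" using assms by (intro power_mono) auto
    then have "9 / 2 * (h * J)^2 \<le> 9 / 2 * (2 * L)^2" by simp
    then show ?thesis using assms by (intro divide_right_mono) auto
  qed
  finally have B2: "T \<le> 18 * L^2 / l^2" using assms(1) by simp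
  have "T^2 \<le> (18 * L^2 / l^2)^2" using B2 assms(2) by (intro power_mono) auto
  also have "\<dots> = 324 * L^4 * (1 / l^2) * (1 / l^2)"
    by (simp add: power2_eq_square field_simps power4_eq_xxxx)
  also have "\<dots> \<le> 324 * L^4 * (1 / l^2)"
  proof -
    have "1 / l^2 \<le> 1" using assms by simp
    moreover have "0 \<le> 324 * L^4 * (1 / l^2)" by simp
    ultimately show ?thesis by (rule mult_left_le)
  qed
  finally show ?thesis .
qed
lemma gen_step: "(S::real) \<le> 2 - c \<Longrightarrow> a + b \<le> c \<Longrightarrow> S + a \<le> 2 - b"
  by simp

lemma inv_sq_sum:
  "m \<ge> 1 \<Longrightarrow> (\<Sum>l=1..m. 1 / (real l)^2) \<le> 2 - 1 / real m"
proof (induction m rule: dec_induct)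
  case base
  then show ?case by simp
next
  case (step m)
  have m0: "real m > 0" using step(1) by simp
  have k: "1 / (real m + 1)^2 + 1 / (real m + 1) \<le> 1 / real m" using st[OF m0] .
  have "(\<Sum>l=1..Suc m. 1 / (real l)^2) = (\<Sum>l=1..m. 1 / (real l)^2) + 1 / (real m + 1)^2"
    by simp
  have e: "(\<Sum>l=1..Suc m. 1 / (real l)^2) = (\<Sum>l=1..m. 1 / (real l)^2) + 1 / (real m + 1)^2"
    by simp
  have "(\<Sum>l=1..Suc m. 1 / (real l)^2) \<le> 2 - 1 / (real m + 1)"
    unfolding e by (rule gen_step[OF step(3) k])
  then show ?case by (simp add: add.commute)
qed

lemma term_bound:
  fixes dt h q :: real
  assumes "dt > 0" "h > 0" "dt / h^2 \<le> 1/2" "0 < q" "q < 1" "n \<ge> 1"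
  shows "\<bar>dt * (\<Sum>k=0..n-1. (1 + dt * (- 4 / h^2 * q)) ^ k)\<bar> \<le> h^2 / (2 * q)"
proof -
  define mu where "mu = 4 * dt * q / h^2"
  have r: "1 + dt * (- 4 / h^2 * q) = 1 - mu" unfolding mu_def by simp
  have mpos: "mu > 0" unfolding mu_def using assms by simp
  have "mu = 4 * q * (dt / h^2)" unfolding mu_def by simp
  also have "\<dots> \<le> 4 * q * (1/2)" using assms by (intro mult_left_mono) auto
  also have "\<dots> < 2" using assms by simp
  finally have m2: "mu < 2" .
  have ab: "\<bar>1 - mu\<bar> \<le> 1" using mpos m2 by simp
  have set: "{0..n-1} = {..<n}" using assms(6) by auto
  have "(\<Sum>k=0..n-1. (1 - mu) ^ k) = (1 - (1-mu)^n) / mu"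
    unfolding set sum_gp_strict using mpos by simp
  moreover have "\<bar>1 - (1-mu)^n\<bar> \<le> 2"
  proof -
    have "\<bar>(1-mu)^n\<bar> \<le> 1" using ab by (simp add: power_abs power_le_one)
    then show ?thesis by linarith
  qed
  ultimately have "\<bar>dt * (\<Sum>k=0..n-1. (1 - mu) ^ k)\<bar> \<le> dt * (2 / mu)"
    using assms mpos by (simp add: abs_mult divide_right_mono)
  also have "\<dots> = h^2 / (2 * q)" unfolding mu_def using assms by (simp add: field_simps)
  finally show ?thesis unfolding r .
qed

theorem proposition3p4:
  fixes L :: real
  assumes "L > 0"
  shows "\<exists>C > 0. \<forall>J::nat. \<forall>dt::real. \<forall>n::nat.
           J \<ge> 2 \<longrightarrow> dt > 0 \<longrightarrow> dt / (dx L J)^2 \<le> 1/2 \<longrightarrow> n \<ge> 1 \<longrightarrow>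
           (\<Sum>l=1..J-1. \<bar>dt * (\<Sum>k=0..n-1. (1 + dt * lam L J l) ^ k)\<bar>^2) \<le> C"
proof (intro exI[of _ "648 * L^4"] conjI allI impI)
  show "0 < 648 * L^4" using assms by simp
  fix J :: nat and dt :: real and n :: nat
  assume J: "J \<ge> 2" and dt: "dt > 0" and cfl: "dt / (dx L J)^2 \<le> 1/2" and n: "n \<ge> 1"
  define h where "h = dx L J"
  have hpos: "h > 0" unfolding h_def dx_def using J assms by simp
  have hJ: "h * real J \<le> 2 * L" unfolding h_def using A J assms by simp
  have each: "\<bar>dt * (\<Sum>k=0..n-1. (1 + dt * lam L J l) ^ k)\<bar>^2 \<le> 324 * L^4 * (1 / (real l)^2)"
    if l: "l \<in> {1..J-1}" for l
  proof -
    have l1: "1 \<le> l" and lJ: "l < J" using l J by auto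
    define x where "x = real l * pi / (2 * real J)"
    define q where "q = (sin x)^2"
    have x0: "0 < x" unfolding x_def using l1 J by simp
    have xl: "x < pi / 2" unfolding x_def using lJ J by (simp add: field_simps)
    have sx: "sin x \<ge> x / 3" using sin_lb[of x] x0 xl pi_less_4 by simp
    have sl: "sin x \<ge> real l / (3 * real J)"
    proof -
      have "real l / (3 * real J) \<le> x / 3"
      proof -
        have "2 * real l \<le> pi * real l" by (rule mult_right_mono[OF pi_ge_two]) simp
        then show ?thesis unfolding x_def using J by (simp add: field_simps)
      qed
      then show ?thesis using sx by (rule order_trans)
    qed
    have sxpos: "sin x > 0" using x0 xl by (intro sin_gt_zero) auto
    have sx1: "sin x < 1"
    proof -
      have "sin x < sin (pi/2)" using x0 xl by (intro sin_monotone_2pi) auto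
      then show ?thesis by simp
    qed
    have q0: "0 < q" "q < 1" unfolding q_def using sxpos sx1
      by (auto simp: power_less_one_iff)
    have lamq: "lam L J l = - 4 / h^2 * q" unfolding lam_def h_def q_def x_def by simp
    have cfl': "dt / h^2 \<le> 1/2" using cfl h_def by simp
    have Bd: "\<bar>dt * (\<Sum>k=0..n-1. (1 + dt * lam L J l) ^ k)\<bar> \<le> h^2 / (2 * q)"
      unfolding lamq by (rule term_bound[OF dt hpos cfl' q0 n])
    have lpos: "real l \<ge> 1" using l1 by simp
    have qlb: "q \<ge> (real l / (3 * real J))^2" unfolding q_def
      using sl lpos J by (intro power_mono) auto
    show ?thesis
      by (rule B[OF Bd abs_ge_zero qlb hJ lpos _ hpos assms]) (use J in simp)
  qed
  have "(\<Sum>l=1..J-1. \<bar>dt * (\<Sum>k=0..n-1. (1 + dt * lam L J l) ^ k)\<bar>^2)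
        \<le> (\<Sum>l=1..J-1. 324 * L^4 * (1 / (real l)^2))"
    by (rule sum_mono) (rule each)
  also have "\<dots> = 324 * L^4 * (\<Sum>l=1..J-1. 1 / (real l)^2)"
    by (simp add: sum_distrib_left)
  also have "\<dots> \<le> 324 * L^4 * 2"
  proof -
    have "(\<Sum>l=1..J-1. 1 / (real l)^2) \<le> 2 - 1 / real (J-1)"
      using J by (intro inv_sq_sum) auto
    also have "\<dots> \<le> 2" by simp
    finally show ?thesis using assms by (intro mult_left_mono) auto
  qed
  finally show "(\<Sum>l=1..J-1. \<bar>dt * (\<Sum>k=0..n-1. (1 + dt * lam L J l) ^ k)\<bar>^2) \<le> 648 * L^4"
    by simp
qed

end
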